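(* \[ B^{\mathrm{pk}}(x,y)=\sqrt{\frac{\sqrt{1-y}\cosh(x\sqrt{1-y})+\sinh(x\sqrt{1-y})}{\sqrt{1-y}\cosh(x\sqrt{1-y})-\sinh(x\sqrt{1-y})}}. \]
   Context: For a permutation $\pi=\pi_1\cdots\pi_n$, $\operatorname{des}(\pi)$ is the number of $1\le i\le n-1$ with $\pi_i>\pi_{i+1}$, $\operatorname{asc}(\pi)$ the number with $\pi_i<\pi_{i+1}$, and $\operatorname{pk}(\pi)$ the number of $2\le i\le n-1$ with $\pi_{i-1}<\pi_i>\pi_{i+1}$. A ballot permutation is one with $\operatorname{asc}(\pi_1\cdots\pi_i)\ge\operatorname{des}(\pi_1\cdots\pi_i)$ for all $i$; $\mathscr B_n$ is the set of ballot permutations of $[n]$, $\mathscr B_0=\{\epsilon\}$ with $\operatorname{pk}(\epsilon)=0$. $B^{\mathrm{pk}}(x,y)=\sum_{n\ge0}\sum_{\pi\in\mathscr B_n}y^{\operatorname{pk}(\pi)}\frac{x^n}{n!}$. *)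

theory Defs
  imports "HOL-Analysis.Analysis" "HOL-Combinatorics.Multiset_Permutations"
begin

text \<open>Permutations are lists; position i (1-based in the paper) is index i-1 here.\<close>

definition des :: "nat list \<Rightarrow> nat" where
  "des p = card {i. i + 1 < length p \<and> p ! i > p ! (i + 1)}"

definition asc :: "nat list \<Rightarrow> nat" where
  "asc p = card {i. i + 1 < length p \<and> p ! i < p ! (i + 1)}"

definition pk :: "nat list \<Rightarrow> nat" where
  "pk p = card {i. 0 < i \<and> i + 1 < length p \<and> p ! (i - 1) < p ! i \<and> p ! i > p ! (i + 1)}"

definition ballot :: "nat list \<Rightarrow> bool" where
  "ballot p \<longleftrightarrow> (\<forall>i \<le> length p. asc (take i p) \<ge> des (take i p))"

definition ballot_perms :: "nat \<Rightarrow> nat list set" where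
  "ballot_perms n = {p \<in> permutations_of_set {1..n}. ballot p}"

end

theory Submission
  imports Defs
begin


lemma mono_des:
  assumes "strict_mono_on (set p) f"
  shows "des (map f p) = des p"
proof -
  have "{i. i + 1 < length (map f p) \<and> map f p ! i > map f p ! (i + 1)}
      = {i. i + 1 < length p \<and> p ! i > p ! (i + 1)}"
    using strict_mono_on_less[OF assms] by (auto simp: nth_mem)
  then show ?thesis unfolding des_def by simp
qed

lemma mono_asc:
  assumes "strict_mono_on (set p) f"
  shows "asc (map f p) = asc p"
proof -
  have "{i. i + 1 < length (map f p) \<and> map f p ! i < map f p ! (i + 1)}
      = {i. i + 1 < length p \<and> p ! i < p ! (i + 1)}"
    using strict_mono_on_less[OF assms] by (auto simp: nth_mem)
  then show ?thesis unfolding asc_def by simp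
qed

lemma mono_pk:
  assumes "strict_mono_on (set p) f"
  shows "pk (map f p) = pk p"
proof -
  have "{i. 0 < i \<and> i + 1 < length (map f p) \<and> map f p ! (i - 1) < map f p ! i \<and> map f p ! i > map f p ! (i + 1)}
      = {i. 0 < i \<and> i + 1 < length p \<and> p ! (i - 1) < p ! i \<and> p ! i > p ! (i + 1)}"
    using strict_mono_on_less[OF assms] by (auto simp: nth_mem)
  then show ?thesis unfolding pk_def by simp
qed

lemma mono_ballot:
  assumes "strict_mono_on (set p) f"
  shows "ballot (map f p) = ballot p"
proof -
  have "strict_mono_on (set (take i p)) f" for i
    using assms set_take_subset[of i p] unfolding strict_mono_on_def by blast
  then show ?thesis unfolding ballot_def
    by (simp add: take_map mono_asc mono_des)
qed

definition PS :: "real \<Rightarrow> nat set \<Rightarrow> real" where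
  "PS y A = (\<Sum>p\<in>permutations_of_set A. y ^ pk p)"

definition BS :: "real \<Rightarrow> nat set \<Rightarrow> real" where
  "BS y A = (\<Sum>p\<in>{p\<in>permutations_of_set A. ballot p}. y ^ pk p)"

lemma std_map:
  fixes A :: "nat set"
  assumes "finite A"
  obtains g where "strict_mono_on {0..<card A} g" "g ` {0..<card A} = A" "inj_on g {0..<card A}"
proof -
  define xs where "xs = sorted_list_of_set A"
  have sw: "sorted_wrt (<) xs" unfolding xs_def by (rule strict_sorted_list_of_set)
  have len: "length xs = card A" unfolding xs_def by simp
  have st: "set xs = A" unfolding xs_def using assms by simp
  have d: "distinct xs" unfolding xs_def by simp
  have sm: "strict_mono_on {0..<card A} (\<lambda>i. xs ! i)"
    unfolding strict_mono_on_def using sorted_wrt_nth_less[OF sw] len by auto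
  have im: "(\<lambda>i. xs ! i) ` {0..<card A} = A"
    using st len by (auto simp: in_set_conv_nth)
  have "inj_on (\<lambda>i. xs ! i) {0..<card A}"
    using d len by (auto simp: inj_on_def nth_eq_iff_index_eq)
  then show ?thesis using that sm im by blast
qed

lemma std_sum:
  fixes A :: "nat set" and F :: "nat list \<Rightarrow> real"
  assumes "finite A"
    and inv: "\<And>f p. strict_mono_on (set p) f \<Longrightarrow> F (map f p) = F p"
  shows "(\<Sum>p\<in>permutations_of_set A. F p) = (\<Sum>p\<in>permutations_of_set {0..<card A}. F p)"
proof -
  obtain g where g: "strict_mono_on {0..<card A} g" "g ` {0..<card A} = A" "inj_on g {0..<card A}"
    using std_map[OF assms(1)] by blast
  have pe: "permutations_of_set A = map g ` permutations_of_set {0..<card A}"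
    using permutations_of_set_image_inj[OF g(3)] g(2) by simp
  have inj: "inj_on (map g) (permutations_of_set {0..<card A})"
    apply (rule inj_on_mapI)
    using g(3) by (auto simp: permutations_of_set_def)
  have "(\<Sum>p\<in>permutations_of_set A. F p) = (\<Sum>p\<in>permutations_of_set {0..<card A}. F (map g p))"
    unfolding pe by (rule sum.reindex[OF inj, unfolded comp_def])
  also have "\<dots> = (\<Sum>p\<in>permutations_of_set {0..<card A}. F p)"
  proof (rule sum.cong[OF refl])
    fix p assume "p \<in> permutations_of_set {0..<card A}"
    then have "set p = {0..<card A}" by (simp add: permutations_of_set_def)
    then show "F (map g p) = F p" using inv g(1) by simp
  qed
  finally show ?thesis .
qed

lemma PS_std: "finite A \<Longrightarrow> PS y A = PS y {0..<card A}"
  unfolding PS_def by (rule std_sum) (simp_all add: mono_pk)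

lemma BS_std: "finite A \<Longrightarrow> BS y A = BS y {0..<card A}"
proof -
  assume fa: "finite A"
  have "BS y A = (\<Sum>p\<in>permutations_of_set A. if ballot p then y ^ pk p else 0)"
    unfolding BS_def by (simp add: sum.inter_filter[symmetric] Collect_conj_eq[symmetric])
  also have "\<dots> = (\<Sum>p\<in>permutations_of_set {0..<card A}. if ballot p then y ^ pk p else 0)"
    by (rule std_sum[OF fa]) (simp add: mono_pk mono_ballot)
  also have "\<dots> = BS y {0..<card A}"
    unfolding BS_def by (simp add: sum.inter_filter[symmetric])
  finally show ?thesis .
qed



lemma pk_Nil[simp]: "pk [] = 0" by (simp add: pk_def)

lemma pk_Cons:
  "pk (a # zs) = (if 2 \<le> length zs \<and> a < zs!0 \<and> zs!1 < zs!0 then 1 else 0) + pk zs"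
proof -
  let ?c = "2 \<le> length zs \<and> a < zs!0 \<and> zs!1 < zs!0"
  let ?Z = "{i. 0 < i \<and> i + 1 < length zs \<and> zs ! (i - 1) < zs ! i \<and> zs ! i > zs ! (i + 1)}"
  have eq: "{i. 0 < i \<and> i + 1 < length (a#zs) \<and> (a#zs) ! (i - 1) < (a#zs) ! i \<and> (a#zs) ! i > (a#zs) ! (i + 1)}
      = (if ?c then {1} else {}) \<union> Suc ` ?Z"
  proof (rule set_eqI)
    fix i
    show "i \<in> {i. 0 < i \<and> i + 1 < length (a#zs) \<and> (a#zs) ! (i - 1) < (a#zs) ! i \<and> (a#zs) ! i > (a#zs) ! (i + 1)}
      \<longleftrightarrow> i \<in> (if ?c then {1} else {}) \<union> Suc ` ?Z"
    proof (cases i)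
      case 0 then show ?thesis by auto
    next
      case (Suc j)
      show ?thesis
      proof (cases j)
        case 0 then show ?thesis using Suc by (auto simp: numeral_2_eq_2)
      next
        case (Suc k)
        then show ?thesis using \<open>i = Suc j\<close> by (auto simp: image_iff)
      qed
    qed
  qed
  have fin: "finite ?Z" by (rule finite_subset[of _ "{..<length zs}"]) auto
  have "card ((if ?c then {1} else {}) \<union> Suc ` ?Z) = (if ?c then 1 else 0) + card ?Z"
  proof -
    have "1 \<notin> Suc ` ?Z" by auto
    then show ?thesis using fin by (simp add: card_image card_insert_if)
  qed
  then show ?thesis unfolding pk_def eq by simp
qed

lemma pk_single[simp]: "pk [a] = 0" by (simp add: pk_Cons)
lemma pk_two[simp]: "pk [a, b] = 0" by (simp add: pk_Cons)

lemma pk_append: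
  assumes "xs \<noteq> []" "ys \<noteq> []"
  shows "pk (xs @ ys) = pk xs + pk ys
     + (if 2 \<le> length xs \<and> xs ! (length xs - 2) < last xs \<and> hd ys < last xs then 1 else 0)
     + (if 2 \<le> length ys \<and> last xs < hd ys \<and> ys ! 1 < hd ys then 1 else 0)"
  using assms(1)
proof (induction xs rule: list_nonempty_induct)
  case (single x)
  then show ?case using assms(2) by (simp add: pk_Cons hd_conv_nth)
next
  case (cons x xs)
  show ?case
  proof (cases "length xs = 1")
    case True
    then obtain z where xs: "xs = [z]" by (cases xs) auto
    have "0 < length ys" using assms(2) by simp
    then show ?thesis using assms(2) unfolding xs
      by (simp add: pk_Cons hd_conv_nth nth_append Suc_le_eq)
  next
    case False
    with cons.hyps have l2: "2 \<le> length xs" by (cases xs) (auto simp: Suc_le_eq)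
    have "pk ((x # xs) @ ys) = (if x < xs!0 \<and> xs!1 < xs!0 then 1 else 0) + pk (xs @ ys)"
    proof -
      have "(xs@ys)!0 = xs!0" "(xs@ys)!1 = xs!1" "2 \<le> length (xs @ ys)" using l2 by (auto simp: nth_append)
      then show ?thesis by (simp only: append_Cons pk_Cons) simp
    qed
    moreover have "pk (x # xs) = (if x < xs!0 \<and> xs!1 < xs!0 then 1 else 0) + pk xs"
      using l2 by (simp add: pk_Cons)
    moreover have "(x # xs) ! (length (x # xs) - 2) = xs ! (length xs - 2)"
    proof -
      have "length (x # xs) - 2 = Suc (length xs - 2)" using l2 by simp
      then show ?thesis by simp
    qed
    moreover have "last (x # xs) = last xs" using cons.hyps by simp
    ultimately show ?thesis using cons.IH l2 by simp
  qed
qed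

lemma pk_snoc: "pk (xs @ [a]) = pk xs + (if 2 \<le> length xs \<and> xs ! (length xs - 2) < last xs \<and> a < last xs then 1 else 0)"
  by (cases "xs = []") (simp_all add: pk_append)

lemma pk_rev[simp]: "pk (rev xs) = pk xs"
proof (induction xs)
  case Nil then show ?case by simp
next
  case (Cons a xs)
  show ?case
  proof (cases "length xs < 2")
    case True
    then have "xs = [] \<or> (\<exists>b. xs = [b])" by (cases xs) auto
    then show ?thesis by (auto simp: pk_Cons)
  next
    case False
    have "pk (rev (a # xs)) = pk (rev xs) + (if rev xs ! (length xs - 2) < last (rev xs) \<and> a < last (rev xs) then 1 else 0)"
      using False by (simp add: pk_snoc)
    moreover have "rev xs ! (length xs - 2) = xs ! 1" using False by (simp add: rev_nth)
    moreover have "last (rev xs) = xs ! 0" using False by (cases xs) (auto simp: last_conv_nth)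
    ultimately show ?thesis using Cons False by (auto simp: pk_Cons)
  qed
qed



definition stp :: "nat \<Rightarrow> nat \<Rightarrow> int" where
  "stp a b = (if a < b then 1 else if b < a then -1 else 0)"

definition S :: "nat list \<Rightarrow> nat \<Rightarrow> int" where
  "S p t = (\<Sum>k<t. stp (p!k) (p!(k+1)))"

lemma S_0[simp]: "S p 0 = 0" by (simp add: S_def)
lemma S_Suc: "S p (Suc t) = S p t + stp (p!t) (p!(t+1))" by (simp add: S_def)

lemma card_filter_int:
  fixes n :: nat
  shows "int (card {i\<in>{..<n}. P i}) = (\<Sum>i<n. if P i then 1 else 0)"
proof -
  have "int (card {i\<in>{..<n}. P i}) = (\<Sum>i\<in>{i\<in>{..<n}. P i}. (1::int))" by simp
  also have "\<dots> = (\<Sum>i<n. if P i then 1 else 0)" using sum.inter_filter[of "{..<n}" "\<lambda>_. (1::int)" P] by simp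
  finally show ?thesis .
qed

lemma asc_des_take:
  assumes "l \<le> length p"
  shows "int (asc (take l p)) - int (des (take l p)) = S p (l - 1)"
proof -
  have a: "asc (take l p) = card {i\<in>{..<l-1}. p!i < p!(i+1)}"
    unfolding asc_def using assms by (intro arg_cong[where f=card]) auto
  have d: "des (take l p) = card {i\<in>{..<l-1}. p!i > p!(i+1)}"
    unfolding des_def using assms by (intro arg_cong[where f=card]) auto
  show ?thesis unfolding a d card_filter_int S_def sum_subtractf[symmetric]
    by (rule sum.cong) (auto simp: stp_def)
qed

lemma ballot_S: "ballot p \<longleftrightarrow> (\<forall>t<length p. 0 \<le> S p t)"
proof -
  have "ballot p \<longleftrightarrow> (\<forall>l\<le>length p. 0 \<le> S p (l - 1))"
    unfolding ballot_def using asc_des_take by (metis diff_ge_0_iff_ge of_nat_le_iff)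
  also have "\<dots> \<longleftrightarrow> (\<forall>t<length p. 0 \<le> S p t)"
  proof
    assume H: "\<forall>l\<le>length p. 0 \<le> S p (l - 1)"
    show "\<forall>t<length p. 0 \<le> S p t"
    proof (intro allI impI)
      fix t assume "t < length p"
      then show "0 \<le> S p t" using H[rule_format, of "Suc t"] by simp
    qed
  next
    assume H: "\<forall>t<length p. 0 \<le> S p t"
    show "\<forall>l\<le>length p. 0 \<le> S p (l - 1)"
    proof (intro allI impI)
      fix l assume "l \<le> length p"
      then show "0 \<le> S p (l - 1)" using H by (cases l) auto
    qed
  qed
  finally show ?thesis .
qed

lemma S_drop: "j + t < length p \<Longrightarrow> S (drop j p) t = S p (j + t) - S p j"
proof (induction t)
  case 0 then show ?case by simp
next
  case (Suc t)
  then show ?case by (simp add: S_Suc add.commute add.left_commute)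
qed

lemma stp_swap: "stp a b = - stp b a" by (auto simp: stp_def)

lemma S_revtake: "t < j \<Longrightarrow> j \<le> length p \<Longrightarrow> S (rev (take j p)) t = S p (j - 1 - t) - S p (j - 1)"
proof (induction t)
  case 0 then show ?case by simp
next
  case (Suc t)
  have e1: "rev (take j p) ! t = p ! (j - 1 - t)" using Suc.prems by (simp add: rev_nth)
  have e2: "rev (take j p) ! (t+1) = p ! (j - 2 - t)" using Suc.prems by (simp add: rev_nth)
  have e3: "S p (j - 1 - t) = S p (j - 2 - t) + stp (p ! (j - 2 - t)) (p ! (j - 1 - t))"
  proof -
    have "j - 1 - t = Suc (j - 2 - t)" using Suc.prems by simp
    then show ?thesis by (simp add: S_Suc)
  qed
  have IH: "S (rev (take j p)) t = S p (j - 1 - t) - S p (j - 1)" using Suc by simp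
  have "S (rev (take j p)) (Suc t) = S (rev (take j p)) t + stp (p ! (j - 1 - t)) (p ! (j - 2 - t))"
    using e1 e2 by (simp add: S_Suc)
  also have "\<dots> = S p (j - 2 - t) - S p (j - 1)"
    using IH e3 stp_swap[of "p ! (j - 1 - t)" "p ! (j - 2 - t)"] by simp
  finally show ?case by (simp add: numeral_2_eq_2)
qed

lemma ballot_drop_iff:
  assumes "j \<le> length p"
  shows "ballot (drop j p) \<longleftrightarrow> (\<forall>u. j \<le> u \<and> u < length p \<longrightarrow> S p j \<le> S p u)"
proof -
  have "ballot (drop j p) \<longleftrightarrow> (\<forall>t. j + t < length p \<longrightarrow> S p j \<le> S p (j + t))"
    unfolding ballot_S by (auto simp: S_drop)
  also have "\<dots> \<longleftrightarrow> (\<forall>u. j \<le> u \<and> u < length p \<longrightarrow> S p j \<le> S p u)"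
    by (metis le_add1 le_add_diff_inverse)
  finally show ?thesis .
qed

lemma ballot_revtake_iff:
  assumes "j \<le> length p"
  shows "ballot (rev (take j p)) \<longleftrightarrow> (\<forall>u<j. S p (j - 1) \<le> S p u)"
proof -
  have "ballot (rev (take j p)) \<longleftrightarrow> (\<forall>t<j. S p (j - 1) \<le> S p (j - 1 - t))"
  proof -
    have L: "length (rev (take j p)) = j" using assms by simp
    have E: "\<And>t. t<j \<Longrightarrow> S (rev (take j p)) t = S p (j - 1 - t) - S p (j - 1)"
      using S_revtake assms by blast
    show ?thesis unfolding ballot_S L using E by (metis diff_ge_0_iff_ge)
  qed
  also have "\<dots> \<longleftrightarrow> (\<forall>u<j. S p (j - 1) \<le> S p u)"
  proof
    assume H: "\<forall>t<j. S p (j - 1) \<le> S p (j - 1 - t)"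
    show "\<forall>u<j. S p (j - 1) \<le> S p u"
    proof (intro allI impI)
      fix u assume "u < j"
      then show "S p (j - 1) \<le> S p u" using H[rule_format, of "j - 1 - u"] by simp
    qed
  qed auto
  finally show ?thesis .
qed

lemma count2:
  fixes h :: "nat \<Rightarrow> int"
  assumes n: "0 < n"
    and st: "\<And>k. k + 1 < n \<Longrightarrow> h (k+1) = h k + 1 \<or> h (k+1) = h k - 1"
  shows "card {j\<in>{0..n}. (\<forall>t<j. h (j - 1) \<le> h t) \<and> (\<forall>t. j \<le> t \<and> t < n \<longrightarrow> h j \<le> h t)} = 2"
proof -
  define V where "V = {j\<in>{0..n}. (\<forall>t<j. h (j - 1) \<le> h t) \<and> (\<forall>t. j \<le> t \<and> t < n \<longrightarrow> h j \<le> h t)}"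
  define m where "m = Min (h ` {0..<n})"
  have mle: "t < n \<Longrightarrow> m \<le> h t" for t unfolding m_def by (intro Min_le) auto
  have "m \<in> h ` {0..<n}" unfolding m_def using n by (intro Min_in) auto
  define Z where "Z = {t\<in>{0..<n}. h t = m}"
  have Zne: "Z \<noteq> {}" using \<open>m \<in> h ` {0..<n}\<close> unfolding Z_def by auto
  have Zfin: "finite Z" unfolding Z_def by auto
  define F where "F = Min Z"
  define L where "L = Max Z"
  have FZ: "F \<in> Z" unfolding F_def using Zne Zfin by (intro Min_in)
  have LZ: "L \<in> Z" unfolding L_def using Zne Zfin by (intro Max_in)
  have Fn: "F < n" "h F = m" using FZ unfolding Z_def by auto
  have Ln: "L < n" "h L = m" using LZ unfolding Z_def by auto
  have Fmin: "m < h t" if "t < F" for t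
  proof -
    have tn: "t < n" using that Fn by simp
    have "t \<notin> Z" using Min_le[OF Zfin, of t] that unfolding F_def by auto
    then show ?thesis using mle[OF tn] tn unfolding Z_def by auto
  qed
  have Lmax: "m < h t" if "L < t" "t < n" for t
  proof -
    have "t \<notin> Z" using Max_ge[OF Zfin, of t] that unfolding L_def by auto
    then show ?thesis using mle[of t] that unfolding Z_def by auto
  qed
  have FL: "F \<le> L" unfolding F_def using Min_le[OF Zfin LZ] .
  have FV: "F \<in> V"
  proof -
    have "h (F - 1) \<le> h t" if "t < F" for t
    proof -
      have "F - 1 + 1 = F" "F - 1 + 1 < n" using that Fn by auto
      then have "h F = h (F - 1) + 1 \<or> h F = h (F - 1) - 1" using st[of "F - 1"] by simp
      moreover have "m < h (F - 1)" using Fmin[of "F - 1"] that by simp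
      moreover have "m < h t" using Fmin that by simp
      ultimately show ?thesis using Fn by auto
    qed
    moreover have "h F \<le> h t" if "t < n" for t using mle that Fn by simp
    ultimately show ?thesis unfolding V_def using Fn by auto
  qed
  have LV: "Suc L \<in> V"
  proof -
    have "h L \<le> h t" if "t < Suc L" for t using mle that Ln by simp
    moreover have "h (Suc L) \<le> h t" if "Suc L \<le> t" "t < n" for t
    proof -
      have "h (Suc L) = h L + 1 \<or> h (Suc L) = h L - 1" using st[of L] that by simp
      moreover have "m < h (Suc L)" using Lmax[of "Suc L"] that by simp
      moreover have "m < h t" using Lmax that by simp
      ultimately show ?thesis using Ln by auto
    qed
    ultimately show ?thesis unfolding V_def using Ln by auto
  qed
  have VS: "V \<subseteq> {F, Suc L}"
  proof
    fix j assume "j \<in> V"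
    then have jn: "j \<le> n" and C1: "\<And>t. t < j \<Longrightarrow> h (j - 1) \<le> h t"
      and C2: "\<And>t. j \<le> t \<Longrightarrow> t < n \<Longrightarrow> h j \<le> h t" unfolding V_def by auto
    show "j \<in> {F, Suc L}"
    proof (cases "j = 0")
      case True
      then have "h 0 \<le> h F" using C2 Fn by auto
      then have "h 0 = m" using mle[of 0] n Fn by auto
      then have "0 \<in> Z" unfolding Z_def using n by auto
      then have "F = 0" unfolding F_def using Zfin by (meson Min_le le_zero_eq)
      then show ?thesis using True by simp
    next
      case False
      show ?thesis
      proof (cases "j = n")
        case True
        then have "h (n - 1) \<le> h L" using C1 Ln by auto
        then have "h (n - 1) = m" using mle[of "n - 1"] n Ln by auto
        then have "n - 1 \<in> Z" unfolding Z_def using n by auto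
        then have "n - 1 \<le> L" unfolding L_def using Zfin by (simp add: Max_ge)
        then have "Suc L = n" using Ln n by simp
        then show ?thesis using True by simp
      next
        case False
        with \<open>j \<noteq> 0\<close> jn have j: "0 < j" "j < n" by auto
        have "h j = h (j - 1) + 1 \<or> h j = h (j - 1) - 1" using st[of "j - 1"] j by simp
        then show ?thesis
        proof
          assume up: "h j = h (j - 1) + 1"
          have all: "h (j - 1) \<le> h t" if "t < n" for t
            using C1[of t] C2[of t] that up by (cases "t < j") auto
          have hm: "h (j - 1) = m" using all[of F] mle[of "j - 1"] j Fn by linarith
          then have "j - 1 \<in> Z" unfolding Z_def using j by auto
          then have "j - 1 \<le> L" unfolding L_def using Zfin by (simp add: Max_ge)
          moreover have "\<not> (j \<le> L)" using C2[of L] Ln up hm by auto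
          ultimately have "Suc L = j" by simp
          then show ?thesis by simp
        next
          assume dn: "h j = h (j - 1) - 1"
          have all: "h j \<le> h t" if "t < n" for t
            using C1[of t] C2[of t] that dn by (cases "t < j") auto
          have hm: "h j = m" using all[of F] mle[of j] j Fn by linarith
          then have "j \<in> Z" unfolding Z_def using j by auto
          then have "F \<le> j" unfolding F_def using Zfin by (simp add: Min_le)
          moreover have "\<not> (F < j)" using C1[of F] Fn dn hm by auto
          ultimately have "F = j" by simp
          then show ?thesis by simp
        qed
      qed
    qed
  qed
  have "V = {F, Suc L}" using VS FV LV by auto
  moreover have "F \<noteq> Suc L" using FL by simp
  ultimately show ?thesis unfolding V_def[symmetric] by simp
qed



lemma pk_max:
  assumes "\<forall>x\<in>set s \<union> set t. x < m"
  shows "pk (s @ m # t) = pk s + pk t + (if s \<noteq> [] \<and> t \<noteq> [] then 1 else 0)"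
proof -
  have c: "pk (m # t) = pk t"
    using assms by (cases t) (auto simp: pk_Cons)
  show ?thesis
  proof (cases "s = []")
    case True then show ?thesis using c by simp
  next
    case False
    have ls: "last s < m" using assms False by auto
    have "pk (s @ (m # t)) = pk s + pk (m # t) + 0 + (if t \<noteq> [] then 1 else 0)"
      using pk_append[OF False, of "m # t"] ls assms by (cases t) auto
    then show ?thesis using c False by simp
  qed
qed

definition TT :: "nat set \<Rightarrow> (nat set \<times> nat list \<times> nat list) set" where
  "TT A = Sigma (Pow A) (\<lambda>X. permutations_of_set X \<times> permutations_of_set (A - X))"

lemma finite_TT: "finite A \<Longrightarrow> finite (TT A)"
  unfolding TT_def by (intro finite_SigmaI finite_cartesian_product) auto

lemma sum_TT:
  assumes "finite A"
  shows "(\<Sum>X\<in>Pow A. (\<Sum>s\<in>permutations_of_set X. \<Sum>t\<in>permutations_of_set (A - X). f X s t))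
       = (\<Sum>(X, s, t)\<in>TT A. f X s t)"
proof -
  have "(\<Sum>X\<in>Pow A. (\<Sum>s\<in>permutations_of_set X. \<Sum>t\<in>permutations_of_set (A - X). f X s t))
      = (\<Sum>X\<in>Pow A. (\<Sum>(s,t)\<in>permutations_of_set X \<times> permutations_of_set (A - X). f X s t))"
    by (simp add: sum.cartesian_product)
  also have "\<dots> = (\<Sum>(X, s, t)\<in>TT A. f X s t)"
    unfolding TT_def using assms by (subst sum.Sigma) auto
  finally show ?thesis .
qed

lemma decomp_max:
  assumes fin: "finite A" and mx: "\<forall>x\<in>A. x < m"
  shows "(\<Sum>p\<in>permutations_of_set (insert m A). g p)
       = (\<Sum>(X, s, t)\<in>TT A. g (s @ m # t))"
proof (rule sum.reindex_bij_witness[where i = "\<lambda>(X, s, t). s @ m # t"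
      and j = "\<lambda>p. (set (takeWhile (\<lambda>x. x \<noteq> m) p), takeWhile (\<lambda>x. x \<noteq> m) p, tl (dropWhile (\<lambda>x. x \<noteq> m) p))"])
  have mA: "m \<notin> A" using mx by auto
  fix p assume p: "p \<in> permutations_of_set (insert m A)"
  have sp: "set p = insert m A" and dp: "distinct p" using p by (auto simp: permutations_of_set_def)
  define u where "u = takeWhile (\<lambda>x. x \<noteq> m) p"
  define v where "v = tl (dropWhile (\<lambda>x. x \<noteq> m) p)"
  have uv: "takeWhile (\<lambda>x. x \<noteq> m) p = u" "tl (dropWhile (\<lambda>x. x \<noteq> m) p) = v" unfolding u_def v_def by simp_all
  have mp: "m \<in> set p" using sp by simp
  have dw: "dropWhile (\<lambda>x. x \<noteq> m) p = m # v"
  proof -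
    have "dropWhile (\<lambda>x. x \<noteq> m) p \<noteq> []" using mp by (simp add: dropWhile_eq_Nil_conv)
    moreover have "hd (dropWhile (\<lambda>x. x \<noteq> m) p) = m" using hd_dropWhile[of "\<lambda>x. x \<noteq> m" p] calculation by simp
    ultimately show ?thesis unfolding v_def by (cases "dropWhile (\<lambda>x. x \<noteq> m) p") auto
  qed
  have peq: "p = u @ m # v" unfolding u_def using takeWhile_dropWhile_id[of "\<lambda>x. x \<noteq> m" p] dw by simp
  have mu: "m \<notin> set u" unfolding u_def by (auto dest: set_takeWhileD)
  have du: "distinct u" "distinct v" "set u \<inter> set v = {}" "m \<notin> set v" using dp peq by auto
  have su: "set u \<subseteq> A" "set v = A - set u" using sp peq mu du mA by auto
  show "(case (set (takeWhile (\<lambda>x. x \<noteq> m) p), takeWhile (\<lambda>x. x \<noteq> m) p, tl (dropWhile (\<lambda>x. x \<noteq> m) p)) of (X, s, t) \<Rightarrow> s @ m # t) = p"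
    unfolding uv using peq by simp
  show "(set (takeWhile (\<lambda>x. x \<noteq> m) p), takeWhile (\<lambda>x. x \<noteq> m) p, tl (dropWhile (\<lambda>x. x \<noteq> m) p)) \<in> TT A"
    unfolding uv TT_def using su du by (auto simp: permutations_of_set_def)
  show "(case (set (takeWhile (\<lambda>x. x \<noteq> m) p), takeWhile (\<lambda>x. x \<noteq> m) p, tl (dropWhile (\<lambda>x. x \<noteq> m) p)) of (X, s, t) \<Rightarrow> g (s @ m # t)) = g p"
    unfolding uv using peq by simp
next
  fix b assume b: "b \<in> TT A"
  then obtain X s t where bst: "b = (X, s, t)" and S: "X \<subseteq> A" and s: "set s = X" "distinct s"
    and t: "set t = A - X" "distinct t"
    unfolding TT_def by (auto simp: permutations_of_set_def)
  have ms: "m \<notin> set s" "m \<notin> set t" using mx S s t by auto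
  have tw: "takeWhile (\<lambda>x. x \<noteq> m) (s @ m # t) = s"
    using ms by (subst takeWhile_append2) auto
  have dw: "dropWhile (\<lambda>x. x \<noteq> m) (s @ m # t) = m # t"
    using ms by (subst dropWhile_append2) auto
  show "(set (takeWhile (\<lambda>x. x \<noteq> m) (case b of (X, s, t) \<Rightarrow> s @ m # t)),
          takeWhile (\<lambda>x. x \<noteq> m) (case b of (X, s, t) \<Rightarrow> s @ m # t),
          tl (dropWhile (\<lambda>x. x \<noteq> m) (case b of (X, s, t) \<Rightarrow> s @ m # t))) = b"
    using bst tw dw s by simp
  show "(case b of (X, s, t) \<Rightarrow> s @ m # t) \<in> permutations_of_set (insert m A)"
    using bst s t S ms by (auto simp: permutations_of_set_def)
qed

lemma PS_max:
  assumes fin: "finite A" and mx: "\<forall>x\<in>A. x < m"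
  shows "PS y (insert m A) = (\<Sum>X\<in>Pow A. PS y X * PS y (A - X) * (if X \<noteq> {} \<and> X \<noteq> A then y else 1))"
proof -
  have "PS y (insert m A) = (\<Sum>(X, s, t)\<in>TT A. y ^ pk (s @ m # t))"
    unfolding PS_def by (rule decomp_max[OF fin mx])
  also have "\<dots> = (\<Sum>(X, s, t)\<in>TT A. y ^ pk s * y ^ pk t * (if X \<noteq> {} \<and> X \<noteq> A then y else 1))"
  proof (rule sum.cong[OF refl], clarify)
    fix X s t assume "(X, s, t) \<in> TT A"
    then have X: "X \<subseteq> A" "set s = X" "set t = A - X" unfolding TT_def by (auto simp: permutations_of_set_def)
    then have "\<forall>x\<in>set s \<union> set t. x < m" using mx by auto
    moreover have "(s \<noteq> [] \<and> t \<noteq> []) \<longleftrightarrow> (X \<noteq> {} \<and> X \<noteq> A)" using X by auto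
    ultimately show "y ^ pk (s @ m # t) = y ^ pk s * y ^ pk t * (if X \<noteq> {} \<and> X \<noteq> A then y else 1)"
      by (simp add: pk_max power_add)
  qed
  also have "\<dots> = (\<Sum>X\<in>Pow A. (\<Sum>s\<in>permutations_of_set X. \<Sum>t\<in>permutations_of_set (A - X).
                     y ^ pk s * y ^ pk t * (if X \<noteq> {} \<and> X \<noteq> A then y else 1)))"
    by (rule sum_TT[OF fin, symmetric])
  also have "\<dots> = (\<Sum>X\<in>Pow A. PS y X * PS y (A - X) * (if X \<noteq> {} \<and> X \<noteq> A then y else 1))"
    unfolding PS_def sum_product by (simp only: sum_distrib_right)
  finally show ?thesis .
qed

lemma decomp_split:
  assumes fin: "finite A"
  shows "(\<Sum>(X, s, t)\<in>TT A. f s t)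
       = (\<Sum>p\<in>permutations_of_set A. \<Sum>j\<in>{0..card A}. f (rev (take j p)) (drop j p))"
proof -
  have "(\<Sum>(X, s, t)\<in>TT A. f s t) = (\<Sum>(p, j)\<in>Sigma (permutations_of_set A) (\<lambda>_. {0..card A}). f (rev (take j p)) (drop j p))"
  proof (rule sum.reindex_bij_witness[where j = "\<lambda>(X, s, t). (rev s @ t, length s)"
      and i = "\<lambda>(p, j). (set (take j p), rev (take j p), drop j p)"])
    fix a assume a: "a \<in> TT A"
    then obtain X s t where bst: "a = (X, s, t)" and S: "X \<subseteq> A" and s: "set s = X" "distinct s"
      and t: "set t = A - X" "distinct t"
      unfolding TT_def by (auto simp: permutations_of_set_def)
    show "(case case a of (X, s, t) \<Rightarrow> (rev s @ t, length s) of (p, j) \<Rightarrow> (set (take j p), rev (take j p), drop j p)) = a"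
      using bst s by simp
    have "card X \<le> card A" using S fin by (simp add: card_mono)
    moreover have "length s = card X" using s by (metis distinct_card)
    ultimately show "(case a of (X, s, t) \<Rightarrow> (rev s @ t, length s)) \<in> Sigma (permutations_of_set A) (\<lambda>_. {0..card A})"
      using bst s t S by (auto simp: permutations_of_set_def)
    show "(case case a of (X, s, t) \<Rightarrow> (rev s @ t, length s) of (p, j) \<Rightarrow> f (rev (take j p)) (drop j p)) = (case a of (X, s, t) \<Rightarrow> f s t)"
      using bst by simp
  next
    fix b assume b: "b \<in> Sigma (permutations_of_set A) (\<lambda>_. {0..card A})"
    then obtain p j where bpj: "b = (p, j)" and p: "set p = A" "distinct p" and j: "j \<le> card A"
      by (auto simp: permutations_of_set_def)
    have lp: "length p = card A" using p by (metis distinct_card)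
    show "(case case b of (p, j) \<Rightarrow> (set (take j p), rev (take j p), drop j p) of (X, s, t) \<Rightarrow> (rev s @ t, length s)) = b"
      using bpj j lp by simp
    have "set (drop j p) = A - set (take j p)"
    proof -
      have "set (take j p) \<inter> set (drop j p) = {}" using distinct_append[of "take j p" "drop j p"] p by simp
      moreover have "set (take j p) \<union> set (drop j p) = A" using p set_append[of "take j p" "drop j p"] by simp
      ultimately show ?thesis by blast
    qed
    then show "(case b of (p, j) \<Rightarrow> (set (take j p), rev (take j p), drop j p)) \<in> TT A"
      using bpj p unfolding TT_def by (auto simp: permutations_of_set_def dest: in_set_takeD)
  qed
  also have "\<dots> = (\<Sum>p\<in>permutations_of_set A. \<Sum>j\<in>{0..card A}. f (rev (take j p)) (drop j p))"
    by (subst sum.Sigma) auto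
  finally show ?thesis .
qed



lemma S_step:
  assumes "distinct p" "k + 1 < length p"
  shows "S p (k+1) = S p k + 1 \<or> S p (k+1) = S p k - 1"
proof -
  have "p ! k \<noteq> p ! (k+1)" using assms by (simp add: nth_eq_iff_index_eq)
  then show ?thesis by (auto simp: S_Suc stp_def)
qed

lemma valid_pk:
  assumes j: "0 < j" "j < length p"
    and C1: "\<forall>u<j. S p (j - 1) \<le> S p u"
    and C2: "\<forall>u. j \<le> u \<and> u < length p \<longrightarrow> S p j \<le> S p u"
  shows "pk (take j p) + pk (drop j p) = pk p"
proof -
  have ne: "take j p \<noteq> []" "drop j p \<noteq> []" using j by auto
  have l: "last (take j p) = p ! (j - 1)" using j ne(1) by (simp add: last_conv_nth min_def)
  have h: "hd (drop j p) = p ! j" using j by (simp add: hd_drop_conv_nth)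
  have jl: "\<not> (2 \<le> length (take j p) \<and> take j p ! (length (take j p) - 2) < last (take j p))"
  proof
    assume a: "2 \<le> length (take j p) \<and> take j p ! (length (take j p) - 2) < last (take j p)"
    then have j2: "2 \<le> j" using j by simp
    have "take j p ! (length (take j p) - 2) = p ! (j - 2)" using j j2 by simp
    with a l have lt: "p ! (j - 2) < p ! (j - 1)" by simp
    have "S p (j - 1) = S p (j - 2) + stp (p ! (j - 2)) (p ! (j - 1))"
    proof -
      have "j - 1 = Suc (j - 2)" using j2 by simp
      then show ?thesis by (simp add: S_Suc)
    qed
    moreover have "S p (j - 1) \<le> S p (j - 2)" using C1 j2 by simp
    ultimately show False using lt by (simp add: stp_def)
  qed
  have jr: "\<not> (2 \<le> length (drop j p) \<and> drop j p ! 1 < hd (drop j p))"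
  proof
    assume a: "2 \<le> length (drop j p) \<and> drop j p ! 1 < hd (drop j p)"
    then have "2 \<le> length (drop j p)" by blast
    then have j2: "j + 1 < length p" by simp
    have "drop j p ! 1 = p ! (j + 1)" using j2 by simp
    with a h have lt: "p ! (j + 1) < p ! j" by simp
    have "S p (j + 1) = S p j + stp (p ! j) (p ! (j + 1))" by (simp add: S_Suc)
    moreover have "S p j \<le> S p (j + 1)" using C2 j2 by simp
    ultimately show False using lt by (simp add: stp_def)
  qed
  have "pk p = pk (take j p @ drop j p)" by simp
  also have "\<dots> = pk (take j p) + pk (drop j p)"
    using pk_append[OF ne] jl jr by auto
  finally show ?thesis by simp
qed

lemma split_count:
  fixes y :: real
  assumes d: "distinct p" and n: "0 < length p"
  shows "(\<Sum>j\<in>{0..length p}. if ballot (rev (take j p)) \<and> ballot (drop j p)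
            then y ^ (pk (rev (take j p)) + pk (drop j p)) else 0) = 2 * y ^ pk p"
proof -
  define V where "V = {j\<in>{0..length p}. (\<forall>t<j. S p (j - 1) \<le> S p t) \<and> (\<forall>t. j \<le> t \<and> t < length p \<longrightarrow> S p j \<le> S p t)}"
  have cV: "card V = 2" unfolding V_def
    by (rule count2[OF n]) (use S_step[OF d] in auto)
  have "(\<Sum>j\<in>{0..length p}. if ballot (rev (take j p)) \<and> ballot (drop j p)
            then y ^ (pk (rev (take j p)) + pk (drop j p)) else 0)
      = (\<Sum>j\<in>{0..length p}. if j \<in> V then y ^ pk p else 0)"
  proof (rule sum.cong[OF refl])
    fix j assume j: "j \<in> {0..length p}"
    then have jl: "j \<le> length p" by simp
    have iff: "(ballot (rev (take j p)) \<and> ballot (drop j p)) \<longleftrightarrow> j \<in> V"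
      unfolding V_def ballot_revtake_iff[OF jl] ballot_drop_iff[OF jl] using jl by simp
    show "(if ballot (rev (take j p)) \<and> ballot (drop j p) then y ^ (pk (rev (take j p)) + pk (drop j p)) else 0)
        = (if j \<in> V then y ^ pk p else 0)"
    proof (cases "j \<in> V")
      case True
      have "pk (take j p) + pk (drop j p) = pk p"
      proof (cases "j = 0 \<or> j = length p")
        case True then show ?thesis by auto
      next
        case False
        then have j0: "0 < j" "j < length p" using jl by auto
        show ?thesis using \<open>j \<in> V\<close> unfolding V_def by (intro valid_pk[OF j0]) blast+
      qed
      then show ?thesis using True iff by simp
    next
      case False
      then have "\<not> (ballot (rev (take j p)) \<and> ballot (drop j p))" using iff by blast
      then show ?thesis using False by (simp only: if_False)
    qed
  qed
  also have "\<dots> = (\<Sum>j\<in>V. y ^ pk p)"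
  proof -
    have "V \<subseteq> {0..length p}" unfolding V_def by auto
    then have "{0..length p} \<inter> V = V" by blast
    then show ?thesis using sum.inter_restrict[of "{0..length p}" "\<lambda>_. y ^ pk p" V] by simp
  qed
  also have "\<dots> = 2 * y ^ pk p" using cV by simp
  finally show ?thesis .
qed

lemma BS_alt: "BS y X = (\<Sum>s\<in>permutations_of_set X. if ballot s then y ^ pk s else 0)"
  unfolding BS_def by (simp add: sum.inter_filter[symmetric])

lemma BS_split:
  assumes fin: "finite A" and ne: "A \<noteq> {}"
  shows "(\<Sum>X\<in>Pow A. BS y X * BS y (A - X)) = 2 * PS y A"
proof -
  have "(\<Sum>X\<in>Pow A. BS y X * BS y (A - X))
      = (\<Sum>X\<in>Pow A. \<Sum>s\<in>permutations_of_set X. \<Sum>t\<in>permutations_of_set (A - X).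
            (if ballot s \<and> ballot t then y ^ (pk s + pk t) else 0))"
    unfolding BS_alt sum_product by (intro sum.cong refl) (simp add: power_add)
  also have "\<dots> = (\<Sum>(X, s, t)\<in>TT A. (if ballot s \<and> ballot t then y ^ (pk s + pk t) else 0))"
    by (rule sum_TT[OF fin])
  also have "\<dots> = (\<Sum>p\<in>permutations_of_set A. \<Sum>j\<in>{0..card A}.
        if ballot (rev (take j p)) \<and> ballot (drop j p) then y ^ (pk (rev (take j p)) + pk (drop j p)) else 0)"
    by (rule decomp_split[OF fin])
  also have "\<dots> = (\<Sum>p\<in>permutations_of_set A. 2 * y ^ pk p)"
  proof (rule sum.cong[OF refl])
    fix p assume p: "p \<in> permutations_of_set A"
    then have d: "distinct p" and lp: "length p = card A" using length_finite_permutations_of_set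
      by (auto simp: permutations_of_set_def)
    have "0 < length p" using lp fin ne by (simp add: card_gt_0_iff)
    show "(\<Sum>j\<in>{0..card A}. if ballot (rev (take j p)) \<and> ballot (drop j p)
        then y ^ (pk (rev (take j p)) + pk (drop j p)) else 0) = 2 * y ^ pk p"
      using split_count[OF d \<open>0 < length p\<close>, of y] unfolding lp .
  qed
  also have "\<dots> = 2 * PS y A" unfolding PS_def by (simp add: sum_distrib_left)
  finally show ?thesis .
qed



lemma sum_pow_card:
  fixes g :: "nat \<Rightarrow> real"
  assumes fin: "finite A"
  shows "(\<Sum>X\<in>Pow A. g (card X)) = (\<Sum>k\<le>card A. of_nat (card A choose k) * g k)"
proof -
  have "(\<Sum>X\<in>Pow A. g (card X)) = (\<Sum>k\<le>card A. \<Sum>X\<in>{X. X \<in> Pow A \<and> card X = k}. g (card X))"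
  proof (rule sum.group[symmetric])
    show "finite (Pow A)" using fin by simp
    show "finite {..card A}" by simp
    show "card ` Pow A \<subseteq> {..card A}" using card_mono[OF fin] by auto
  qed
  also have "\<dots> = (\<Sum>k\<le>card A. of_nat (card A choose k) * g k)"
  proof (rule sum.cong[OF refl])
    fix k
    have "(\<Sum>X\<in>{X. X \<in> Pow A \<and> card X = k}. g (card X)) = (\<Sum>X\<in>{X. X \<in> Pow A \<and> card X = k}. g k)"
      by (rule sum.cong) auto
    also have "\<dots> = of_nat (card {X. X \<subseteq> A \<and> card X = k}) * g k" by simp
    also have "\<dots> = of_nat (card A choose k) * g k" using n_subsets[OF fin] by simp
    finally show "(\<Sum>X\<in>{X. X \<in> Pow A \<and> card X = k}. g (card X)) = of_nat (card A choose k) * g k" .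
  qed
  finally show ?thesis .
qed

definition pp :: "real \<Rightarrow> nat \<Rightarrow> real" where "pp y n = PS y {0..<n}"
definition bb :: "real \<Rightarrow> nat \<Rightarrow> real" where "bb y n = BS y {0..<n}"

lemma PS_card: "finite A \<Longrightarrow> PS y A = pp y (card A)"
  unfolding pp_def by (rule PS_std)
lemma BS_card: "finite A \<Longrightarrow> BS y A = bb y (card A)"
  unfolding bb_def by (rule BS_std)

lemma pp_0[simp]: "pp y 0 = 1" by (simp add: pp_def PS_def)
lemma ballot_Nil[simp]: "ballot []" by (simp add: ballot_def asc_def des_def)
lemma bb_0[simp]: "bb y 0 = 1"
proof -
  have "{p \<in> permutations_of_set {}. ballot p} = {[]}" by auto
  then show ?thesis by (simp add: bb_def BS_def)
qed

lemma sum_ends: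
  fixes f :: "nat \<Rightarrow> real"
  shows "(\<Sum>k\<le>n. f k * (if k = 0 \<or> k = n then 1 else 0)) = f 0 + f n - (if n = 0 then f 0 else 0)"
proof (cases "n = 0")
  case True then show ?thesis by simp
next
  case False
  have "(\<Sum>k\<le>n. f k * (if k = 0 \<or> k = n then 1 else 0)) = (\<Sum>k\<in>{..n}. if k \<in> {0, n} then f k else 0)"
    by (rule sum.cong) simp_all
  also have "\<dots> = (\<Sum>k\<in>{..n} \<inter> {0, n}. f k)"
    by (rule sum.inter_restrict[symmetric]) simp
  also have "{..n} \<inter> {0, n} = {0, n}" by auto
  finally show ?thesis using False by simp
qed

lemma pp_rec:
  "pp y (Suc n) = y * (\<Sum>k\<le>n. of_nat (n choose k) * pp y k * pp y (n - k))
      + (1 - y) * (2 * pp y n - (if n = 0 then 1 else 0))"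
proof -
  define A where "A = {0..<n}"
  have fin: "finite A" and cA: "card A = n" unfolding A_def by auto
  have ins: "insert n A = {0..<Suc n}" unfolding A_def by auto
  have "pp y (Suc n) = PS y (insert n A)" unfolding pp_def ins ..
  also have "\<dots> = (\<Sum>X\<in>Pow A. PS y X * PS y (A - X) * (if X \<noteq> {} \<and> X \<noteq> A then y else 1))"
    by (rule PS_max[OF fin]) (auto simp: A_def)
  also have "\<dots> = (\<Sum>X\<in>Pow A. (\<lambda>k. pp y k * pp y (n - k) * (if k \<noteq> 0 \<and> k \<noteq> n then y else 1)) (card X))"
  proof (rule sum.cong[OF refl])
    fix X assume "X \<in> Pow A"
    then have X: "X \<subseteq> A" by simp
    have fX: "finite X" using X fin by (rule finite_subset)
    have c1: "card (A - X) = n - card X" using X fin cA by (simp add: card_Diff_subset fX)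
    have c2: "X = {} \<longleftrightarrow> card X = 0" using fX by simp
    have c3: "X = A \<longleftrightarrow> card X = n"
    proof
      assume "X = A" then show "card X = n" using cA by simp
    next
      assume "card X = n" then show "X = A" using card_subset_eq[OF fin X] cA by simp
    qed
    show "PS y X * PS y (A - X) * (if X \<noteq> {} \<and> X \<noteq> A then y else 1)
        = (\<lambda>k. pp y k * pp y (n - k) * (if k \<noteq> 0 \<and> k \<noteq> n then y else 1)) (card X)"
      using fX fin c1 c2 c3 by (simp add: PS_card)
  qed
  also have "\<dots> = (\<Sum>k\<le>n. of_nat (n choose k) * (pp y k * pp y (n - k) * (if k \<noteq> 0 \<and> k \<noteq> n then y else 1)))"
    using sum_pow_card[OF fin] cA by simp
  also have "\<dots> = (\<Sum>k\<le>n. y * (of_nat (n choose k) * pp y k * pp y (n - k))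
        + (1 - y) * ((of_nat (n choose k) * pp y k * pp y (n - k)) * (if k = 0 \<or> k = n then 1 else 0)))"
  proof (rule sum.cong[OF refl])
    fix k
    define C where "C = of_nat (n choose k) * pp y k * pp y (n - k)"
    show "of_nat (n choose k) * (pp y k * pp y (n - k) * (if k \<noteq> 0 \<and> k \<noteq> n then y else 1))
       = y * (of_nat (n choose k) * pp y k * pp y (n - k))
        + (1 - y) * ((of_nat (n choose k) * pp y k * pp y (n - k)) * (if k = 0 \<or> k = n then 1 else 0))"
      unfolding C_def[symmetric] mult.assoc[symmetric]
      by (cases "k = 0"; cases "k = n") (simp_all add: algebra_simps)
  qed
  also have "\<dots> = y * (\<Sum>k\<le>n. of_nat (n choose k) * pp y k * pp y (n - k))
      + (1 - y) * (\<Sum>k\<le>n. (of_nat (n choose k) * pp y k * pp y (n - k)) * (if k = 0 \<or> k = n then 1 else 0))"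
    by (simp only: sum.distrib sum_distrib_left)
  also have "(\<Sum>k\<le>n. (of_nat (n choose k) * pp y k * pp y (n - k)) * (if k = 0 \<or> k = n then 1 else 0))
      = 2 * pp y n - (if n = 0 then 1 else 0)"
    using sum_ends[of "\<lambda>k. of_nat (n choose k) * pp y k * pp y (n - k)" n] by simp
  finally show ?thesis .
qed

lemma bb_conv:
  "(\<Sum>k\<le>n. of_nat (n choose k) * bb y k * bb y (n - k)) = 2 * pp y n - (if n = 0 then 1 else 0)"
proof (cases "n = 0")
  case True then show ?thesis by simp
next
  case False
  define A where "A = {0..<n}"
  have fin: "finite A" and cA: "card A = n" and ne: "A \<noteq> {}" unfolding A_def using False by auto
  have "(\<Sum>k\<le>n. of_nat (n choose k) * bb y k * bb y (n - k))
      = (\<Sum>X\<in>Pow A. (\<lambda>k. bb y k * bb y (n - k)) (card X))"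
    using sum_pow_card[OF fin, of "\<lambda>k. bb y k * bb y (n - k)"] cA by (simp add: mult.assoc)
  also have "\<dots> = (\<Sum>X\<in>Pow A. BS y X * BS y (A - X))"
  proof (rule sum.cong[OF refl])
    fix X assume "X \<in> Pow A"
    then have X: "X \<subseteq> A" by simp
    have fX: "finite X" using X fin by (rule finite_subset)
    have c1: "card (A - X) = n - card X" using X fin cA by (simp add: card_Diff_subset fX)
    show "(\<lambda>k. bb y k * bb y (n - k)) (card X) = BS y X * BS y (A - X)"
      using fX fin c1 by (simp add: BS_card)
  qed
  also have "\<dots> = 2 * PS y A" by (rule BS_split[OF fin ne])
  also have "\<dots> = 2 * pp y n" unfolding pp_def A_def ..
  finally show ?thesis using False by simp
qed

lemma pk_le: "pk p \<le> length p"
proof -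
  have "{i. 0 < i \<and> i + 1 < length p \<and> p ! (i - 1) < p ! i \<and> p ! i > p ! (i + 1)} \<subseteq> {..<length p}" by auto
  then have "card {i. 0 < i \<and> i + 1 < length p \<and> p ! (i - 1) < p ! i \<and> p ! i > p ! (i + 1)} \<le> card {..<length p}"
    by (intro card_mono) auto
  then show ?thesis unfolding pk_def by simp
qed

lemma pow_bound:
  fixes y :: real
  assumes "k \<le> n"
  shows "\<bar>y ^ k\<bar> \<le> (max 1 \<bar>y\<bar>) ^ n"
proof -
  have "\<bar>y ^ k\<bar> = \<bar>y\<bar> ^ k" by (simp add: power_abs)
  also have "\<dots> \<le> (max 1 \<bar>y\<bar>) ^ k" by (rule power_mono) auto
  also have "\<dots> \<le> (max 1 \<bar>y\<bar>) ^ n" by (rule power_increasing[OF assms]) auto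
  finally show ?thesis .
qed

lemma pp_bound: "\<bar>pp y n\<bar> \<le> fact n * (max 1 \<bar>y\<bar>) ^ n"
proof -
  have "\<bar>pp y n\<bar> \<le> (\<Sum>p\<in>permutations_of_set {0..<n}. \<bar>y ^ pk p\<bar>)"
    unfolding pp_def PS_def by (rule sum_abs)
  also have "\<dots> \<le> (\<Sum>p\<in>permutations_of_set {0..<n}. (max 1 \<bar>y\<bar>) ^ n)"
  proof (rule sum_mono)
    fix p assume "p \<in> permutations_of_set {0..<n}"
    then have "length p = n" using length_finite_permutations_of_set by fastforce
    then show "\<bar>y ^ pk p\<bar> \<le> (max 1 \<bar>y\<bar>) ^ n" using pk_le[of p] by (intro pow_bound) simp
  qed
  also have "\<dots> = fact n * (max 1 \<bar>y\<bar>) ^ n" by simp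
  finally show ?thesis .
qed

lemma bb_bound: "\<bar>bb y n\<bar> \<le> fact n * (max 1 \<bar>y\<bar>) ^ n"
proof -
  have "\<bar>bb y n\<bar> \<le> (\<Sum>p\<in>permutations_of_set {0..<n}. \<bar>if ballot p then y ^ pk p else 0\<bar>)"
    unfolding bb_def BS_alt by (rule sum_abs)
  also have "\<dots> \<le> (\<Sum>p\<in>permutations_of_set {0..<n}. (max 1 \<bar>y\<bar>) ^ n)"
  proof (rule sum_mono)
    fix p assume "p \<in> permutations_of_set {0..<n}"
    then have "length p = n" using length_finite_permutations_of_set by fastforce
    then have "\<bar>y ^ pk p\<bar> \<le> (max 1 \<bar>y\<bar>) ^ n" using pk_le[of p] by (intro pow_bound) simp
    then show "\<bar>if ballot p then y ^ pk p else 0\<bar> \<le> (max 1 \<bar>y\<bar>) ^ n" by auto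
  qed
  also have "\<dots> = fact n * (max 1 \<bar>y\<bar>) ^ n" by simp
  finally show ?thesis .
qed

lemma bb_ballot_perms: "(\<Sum>p\<in>ballot_perms n. y ^ pk p) = bb y n"
proof -
  have "(\<Sum>p\<in>ballot_perms n. y ^ pk p) = BS y {1..n}"
    unfolding ballot_perms_def BS_def ..
  also have "\<dots> = bb y n" by (simp add: BS_card)
  finally show ?thesis .
qed



lemma egf_summable:
  fixes a :: "nat \<Rightarrow> real" and M x :: real
  assumes Mx: "M * \<bar>x\<bar> < 1" and M0: "0 \<le> M" and bnd: "\<And>n. \<bar>a n\<bar> \<le> fact n * M ^ n"
  shows "summable (\<lambda>n. norm (a n / fact n * x ^ n))"
proof (rule summable_comparison_test[where g = "\<lambda>n. (M * \<bar>x\<bar>) ^ n"])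
  show "\<exists>N. \<forall>n\<ge>N. norm (norm (a n / fact n * x ^ n)) \<le> (M * \<bar>x\<bar>) ^ n"
  proof (intro exI allI impI)
    fix n :: nat
    have "norm (norm (a n / fact n * x ^ n)) = \<bar>a n\<bar> / fact n * \<bar>x\<bar> ^ n"
      by (simp add: abs_mult power_abs)
    also have "\<dots> \<le> (fact n * M ^ n) / fact n * \<bar>x\<bar> ^ n"
      by (intro mult_right_mono divide_right_mono bnd) auto
    also have "\<dots> = (M * \<bar>x\<bar>) ^ n" by (simp add: power_mult_distrib)
    finally show "norm (norm (a n / fact n * x ^ n)) \<le> (M * \<bar>x\<bar>) ^ n" .
  qed
  show "summable (\<lambda>n. (M * \<bar>x\<bar>) ^ n)"
    by (rule summable_geometric) (use Mx M0 in auto)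
qed

lemma egf_prod:
  fixes a b :: "nat \<Rightarrow> real" and x :: real
  assumes sa: "summable (\<lambda>n. norm (a n / fact n * x ^ n))"
    and sb: "summable (\<lambda>n. norm (b n / fact n * x ^ n))"
  shows "(\<lambda>n. (\<Sum>k\<le>n. of_nat (n choose k) * a k * b (n - k)) / fact n * x ^ n)
          sums ((\<Sum>n. a n / fact n * x ^ n) * (\<Sum>n. b n / fact n * x ^ n))"
proof -
  have cp: "(\<lambda>n. \<Sum>i\<le>n. (a i / fact i * x ^ i) * (b (n - i) / fact (n - i) * x ^ (n - i)))
          sums ((\<Sum>n. a n / fact n * x ^ n) * (\<Sum>n. b n / fact n * x ^ n))"
    by (rule Cauchy_product_sums[OF sa sb])
  have eq: "(\<Sum>i\<le>n. (a i / fact i * x ^ i) * (b (n - i) / fact (n - i) * x ^ (n - i)))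
      = (\<Sum>k\<le>n. of_nat (n choose k) * a k * b (n - k)) / fact n * x ^ n" for n
  proof -
    have "(\<Sum>i\<le>n. (a i / fact i * x ^ i) * (b (n - i) / fact (n - i) * x ^ (n - i)))
        = (\<Sum>i\<le>n. of_nat (n choose i) * a i * b (n - i) / fact n * x ^ n)"
    proof (rule sum.cong[OF refl])
      fix i assume "i \<in> {..n}"
      then have i: "i \<le> n" by simp
      have xe: "x ^ i * x ^ (n - i) = x ^ n" using i by (simp add: power_add[symmetric])
      have "of_nat (n choose i) * a i * b (n - i) / fact n * x ^ n
          = (fact n / (fact i * fact (n - i))) * a i * b (n - i) / fact n * x ^ n"
      proof -
        have "real (n choose i) = fact n / (fact i * fact (n - i))" using binomial_fact[OF i] by simp
        then show ?thesis by simp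
      qed
      also have "\<dots> = a i * b (n - i) / (fact i * fact (n - i)) * x ^ n"
        by (simp add: field_simps)
      also have "\<dots> = (a i / fact i * x ^ i) * (b (n - i) / fact (n - i) * x ^ (n - i))"
        by (simp add: field_simps xe[symmetric])
      finally show "(a i / fact i * x ^ i) * (b (n - i) / fact (n - i) * x ^ (n - i))
          = of_nat (n choose i) * a i * b (n - i) / fact n * x ^ n" by simp
    qed
    also have "\<dots> = (\<Sum>k\<le>n. of_nat (n choose k) * a k * b (n - k)) / fact n * x ^ n"
      by (simp add: sum_distrib_right sum_divide_distrib)
    finally show ?thesis .
  qed
  show ?thesis using cp unfolding eq .
qed

definition MM :: "real \<Rightarrow> real" where "MM y = max 1 \<bar>y\<bar>"
definition Pf :: "real \<Rightarrow> real \<Rightarrow> real" where "Pf y x = (\<Sum>n. pp y n / fact n * x ^ n)"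
definition Bf :: "real \<Rightarrow> real \<Rightarrow> real" where "Bf y x = (\<Sum>n. bb y n / fact n * x ^ n)"

lemma MM_pos: "0 < MM y" "1 \<le> MM y" by (auto simp: MM_def)

lemma summ_pp: "\<bar>x\<bar> < 1 / MM y \<Longrightarrow> summable (\<lambda>n. norm (pp y n / fact n * x ^ n))"
  using MM_pos[of y] pp_bound[of y]
  by (intro egf_summable[where M = "MM y"]) (auto simp: MM_def field_simps)

lemma summ_bb: "\<bar>x\<bar> < 1 / MM y \<Longrightarrow> summable (\<lambda>n. norm (bb y n / fact n * x ^ n))"
  using MM_pos[of y] bb_bound[of y]
  by (intro egf_summable[where M = "MM y"]) (auto simp: MM_def field_simps)

lemma B_sq:
  assumes x: "\<bar>x\<bar> < 1 / MM y"
  shows "Bf y x ^ 2 = 2 * Pf y x - 1"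
proof -
  have s1: "(\<lambda>n. (\<Sum>k\<le>n. of_nat (n choose k) * bb y k * bb y (n - k)) / fact n * x ^ n) sums (Bf y x * Bf y x)"
    unfolding Bf_def by (rule egf_prod[OF summ_bb[OF x] summ_bb[OF x]])
  have s2: "(\<lambda>n. 2 * (pp y n / fact n * x ^ n) - (if n = 0 then 1 else 0)) sums (2 * Pf y x - 1)"
  proof (rule sums_diff)
    show "(\<lambda>n. 2 * (pp y n / fact n * x ^ n)) sums (2 * Pf y x)"
      unfolding Pf_def by (rule sums_mult) (rule summable_sums[OF summable_norm_cancel[OF summ_pp[OF x]]])
    show "(\<lambda>n. if n = 0 then 1 else 0) sums (1::real)"
      using sums_single[of 0 "\<lambda>_. 1::real"] by simp
  qed
  have eq: "(\<Sum>k\<le>n. of_nat (n choose k) * bb y k * bb y (n - k)) / fact n * x ^ n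
      = 2 * (pp y n / fact n * x ^ n) - (if n = 0 then 1 else 0)" for n
    unfolding bb_conv by (cases "n = 0") (auto simp: field_simps)
  have "Bf y x * Bf y x = 2 * Pf y x - 1" using s1 s2 unfolding eq by (rule sums_unique2)
  then show ?thesis by (simp add: power2_eq_square)
qed

lemma P_deriv:
  assumes x: "\<bar>x\<bar> < 1 / MM y"
  shows "(Pf y has_real_derivative (y * Pf y x ^ 2 + (1 - y) * (2 * Pf y x - 1))) (at x)"
proof -
  define c where "c n = pp y n / fact n" for n
  have Pfc: "Pf y = (\<lambda>z. \<Sum>n. c n * z ^ n)" unfolding Pf_def c_def by (rule ext) simp
  have d: "((\<lambda>z. \<Sum>n. c n * z ^ n) has_field_derivative (\<Sum>n. diffs c n * x ^ n)) (at x)"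
  proof (rule termdiffs_strong'[where K = "1 / MM y"])
    fix z :: real assume "norm z < 1 / MM y"
    then show "summable (\<lambda>n. c n * z ^ n)" unfolding c_def
      using summ_pp summable_norm_cancel by force
  qed (use x in simp)
  have dc: "diffs c n = pp y (Suc n) / fact n" for n
  proof -
    have "diffs c n = of_nat (Suc n) * pp y (Suc n) / (of_nat (Suc n) * fact n)"
      unfolding diffs_def c_def fact_Suc by simp
    also have "\<dots> = pp y (Suc n) / fact n"
      by (rule mult_divide_mult_cancel_left) simp
    finally show ?thesis .
  qed
  have s1: "(\<lambda>n. (\<Sum>k\<le>n. of_nat (n choose k) * pp y k * pp y (n - k)) / fact n * x ^ n) sums (Pf y x * Pf y x)"
    unfolding Pf_def by (rule egf_prod[OF summ_pp[OF x] summ_pp[OF x]])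
  have s2: "(\<lambda>n. 2 * (pp y n / fact n * x ^ n) - (if n = 0 then 1 else 0)) sums (2 * Pf y x - 1)"
  proof (rule sums_diff)
    show "(\<lambda>n. 2 * (pp y n / fact n * x ^ n)) sums (2 * Pf y x)"
      unfolding Pf_def by (rule sums_mult) (rule summable_sums[OF summable_norm_cancel[OF summ_pp[OF x]]])
    show "(\<lambda>n. if n = 0 then 1 else 0) sums (1::real)"
      using sums_single[of 0 "\<lambda>_. 1::real"] by simp
  qed
  have s3: "(\<lambda>n. y * ((\<Sum>k\<le>n. of_nat (n choose k) * pp y k * pp y (n - k)) / fact n * x ^ n)
       + (1 - y) * (2 * (pp y n / fact n * x ^ n) - (if n = 0 then 1 else 0)))
      sums (y * (Pf y x * Pf y x) + (1 - y) * (2 * Pf y x - 1))"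
    by (intro sums_add sums_mult s1 s2)
  have eq: "diffs c n * x ^ n = y * ((\<Sum>k\<le>n. of_nat (n choose k) * pp y k * pp y (n - k)) / fact n * x ^ n)
       + (1 - y) * (2 * (pp y n / fact n * x ^ n) - (if n = 0 then 1 else 0))" for n
    unfolding dc pp_rec by (cases "n = 0") (auto simp: field_simps)
  have "(\<Sum>n. diffs c n * x ^ n) = y * (Pf y x * Pf y x) + (1 - y) * (2 * Pf y x - 1)"
    using s3 unfolding eq[symmetric] by (rule sums_unique[symmetric])
  then show ?thesis using d unfolding Pfc[symmetric] by (simp add: power2_eq_square)
qed

lemma B_deriv:
  assumes x: "\<bar>x\<bar> < 1 / MM y"
  shows "\<exists>D. (Bf y has_real_derivative D) (at x)"
proof -
  define c where "c n = bb y n / fact n" for n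
  have Bfc: "Bf y = (\<lambda>z. \<Sum>n. c n * z ^ n)" unfolding Bf_def c_def by (rule ext) simp
  have "((\<lambda>z. \<Sum>n. c n * z ^ n) has_field_derivative (\<Sum>n. diffs c n * x ^ n)) (at x)"
  proof (rule termdiffs_strong'[where K = "1 / MM y"])
    fix z :: real assume "norm z < 1 / MM y"
    then show "summable (\<lambda>n. c n * z ^ n)" unfolding c_def
      using summ_bb summable_norm_cancel by force
  qed (use x in simp)
  then show ?thesis unfolding Bfc by blast
qed

lemma Pf_0: "Pf y 0 = 1"
  unfolding Pf_def using powser_zero[of "\<lambda>n. pp y n / fact n"] by simp
lemma Bf_0: "Bf y 0 = 1"
  unfolding Bf_def using powser_zero[of "\<lambda>n. bb y n / fact n"] by simp



definition Dn :: "real \<Rightarrow> real \<Rightarrow> real" where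
  "Dn y x = sqrt (1 - y) * cosh (x * sqrt (1 - y)) - sinh (x * sqrt (1 - y))"
definition Qf :: "real \<Rightarrow> real \<Rightarrow> real" where
  "Qf y x = sqrt (1 - y) * cosh (x * sqrt (1 - y)) / Dn y x"

lemma Dn_deriv: "(Dn y has_real_derivative
   (sqrt (1 - y) * (sinh (x * sqrt (1 - y)) * sqrt (1 - y)) - cosh (x * sqrt (1 - y)) * sqrt (1 - y))) (at x)"
  unfolding Dn_def[abs_def] by (auto intro!: derivative_eq_intros)

lemma Q_deriv:
  assumes y: "y < 1" and D: "Dn y x \<noteq> 0"
  shows "(Qf y has_real_derivative (y * Qf y x ^ 2 + (1 - y) * (2 * Qf y x - 1))) (at x)"
proof -
  define s where "s = sqrt (1 - y)"
  define c where "c = cosh (x * s)"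
  define h where "h = sinh (x * s)"
  define g where "g = s * c - h"
  have g: "g \<noteq> 0" using D unfolding g_def c_def h_def s_def Dn_def .
  have s2: "s ^ 2 = 1 - y" unfolding s_def using y by simp
  have ch: "c ^ 2 - h ^ 2 = 1" unfolding c_def h_def by (rule hyperbolic_pythagoras)
  have d1: "((\<lambda>x. sqrt (1 - y) * cosh (x * sqrt (1 - y))) has_real_derivative
      (sqrt (1 - y) * (sinh (x * sqrt (1 - y)) * sqrt (1 - y)))) (at x)"
    by (auto intro!: derivative_eq_intros)
  have dq: "(Qf y has_real_derivative
      ((s * (h * s)) * g - (s * c) * (s * (h * s) - c * s)) / (g * g)) (at x)"
  proof -
    have "((\<lambda>x. sqrt (1 - y) * cosh (x * sqrt (1 - y)) / Dn y x) has_real_derivative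
      ((sqrt (1 - y) * (sinh (x * sqrt (1 - y)) * sqrt (1 - y))) * Dn y x
        - (sqrt (1 - y) * cosh (x * sqrt (1 - y))) *
          (sqrt (1 - y) * (sinh (x * sqrt (1 - y)) * sqrt (1 - y)) - cosh (x * sqrt (1 - y)) * sqrt (1 - y)))
       / (Dn y x * Dn y x)) (at x)"
      by (rule DERIV_divide[OF d1 Dn_deriv D])
    then show ?thesis unfolding Qf_def[abs_def] s_def[symmetric] c_def[symmetric] h_def[symmetric]
        Dn_def s_def[symmetric] c_def[symmetric] h_def[symmetric] g_def[symmetric] .
  qed
  have Qx: "Qf y x = s * c / g" unfolding Qf_def Dn_def s_def c_def h_def g_def ..
  have lhs: "((s * (h * s)) * g - (s * c) * (s * (h * s) - c * s)) / (g * g) = s ^ 2 / g ^ 2"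
  proof -
    have "(s * (h * s)) * g - (s * c) * (s * (h * s) - c * s) = s ^ 2 * (c ^ 2 - h ^ 2)"
      unfolding g_def by (simp add: algebra_simps power2_eq_square)
    then show ?thesis using ch by (simp add: power2_eq_square)
  qed
  have rhs: "y * (s * c / g) ^ 2 + (1 - y) * (2 * (s * c / g) - 1) = s ^ 2 / g ^ 2"
  proof -
    have yy: "y = 1 - s ^ 2" using s2 by simp
    have "y * (s * c / g) ^ 2 + (1 - y) * (2 * (s * c / g) - 1)
        = (y * (s * c) ^ 2 + (1 - y) * (2 * s * c * g - g ^ 2)) / g ^ 2"
      using g by (simp add: field_simps power2_eq_square)
    also have "y * (s * c) ^ 2 + (1 - y) * (2 * s * c * g - g ^ 2) = s ^ 2 * (c ^ 2 - h ^ 2)"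
      unfolding yy g_def by (simp add: algebra_simps power2_eq_square)
    finally show ?thesis using ch by simp
  qed
  show ?thesis using dq unfolding lhs Qx rhs[symmetric] .
qed

lemma Q_0: "y < 1 \<Longrightarrow> Qf y 0 = 1"
  unfolding Qf_def Dn_def by simp

lemma ode_unique:
  fixes F H :: "real \<Rightarrow> real" and r :: real
  assumes r: "0 < r"
    and dF: "\<And>x. \<bar>x\<bar> \<le> r \<Longrightarrow> (F has_real_derivative (F x * H x)) (at x)"
    and cH: "continuous_on {-r..r} H"
    and F0: "F 0 = 0"
  shows "\<exists>r'>0. \<forall>x. \<bar>x\<bar> \<le> r' \<longrightarrow> F x = 0"
proof -
  have "continuous_on {-r..r} (\<lambda>x. \<bar>H x\<bar>)" by (intro continuous_intros cH)
  then obtain x1 where "x1 \<in> {-r..r}" and x1: "\<And>x. x \<in> {-r..r} \<Longrightarrow> \<bar>H x\<bar> \<le> \<bar>H x1\<bar>"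
    using continuous_attains_sup[of "{-r..r}" "\<lambda>x. \<bar>H x\<bar>"] r by auto
  define K where "K = \<bar>H x1\<bar> + 1"
  have K0: "0 < K" unfolding K_def by simp
  have K2: "\<bar>H x\<bar> \<le> K" if "\<bar>x\<bar> \<le> r" for x
  proof -
    have "x \<in> {-r..r}" using that by (simp add: abs_le_iff)
    then have "\<bar>H x\<bar> \<le> \<bar>H x1\<bar>" by (rule x1)
    then show ?thesis unfolding K_def by simp
  qed
  note K = K0 K2
  define r' where "r' = min r (1 / (2 * K))"
  have r': "0 < r'" "r' \<le> r" "r' * K \<le> 1 / 2" using r K unfolding r'_def by (auto simp: min_def field_simps)
  have cF: "continuous_on {-r'..r'} F"
  proof (rule continuous_at_imp_continuous_on, intro ballI)
    fix x assume "x \<in> {-r'..r'}"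
    then have "\<bar>x\<bar> \<le> r" using r' by auto
    then show "isCont F x" using dF by (blast intro: DERIV_isCont)
  qed
  have "continuous_on {-r'..r'} (\<lambda>x. \<bar>F x\<bar>)" by (intro continuous_intros cF)
  then obtain x0 where x0in: "x0 \<in> {-r'..r'}" and x0: "\<And>x. x \<in> {-r'..r'} \<Longrightarrow> \<bar>F x\<bar> \<le> \<bar>F x0\<bar>"
    using continuous_attains_sup[of "{-r'..r'}" "\<lambda>x. \<bar>F x\<bar>"] r' by auto
  define m where "m = \<bar>F x0\<bar>"
  have key: "m \<le> m / 2"
  proof -
    have bnd: "\<bar>F z * H z\<bar> \<le> m * K" if "\<bar>z\<bar> \<le> r'" for z
    proof -
      have "\<bar>F z\<bar> \<le> m" using x0[of z] that unfolding m_def by (auto simp: abs_le_iff)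
      moreover have "\<bar>H z\<bar> \<le> K" using K(2)[of z] that r' by simp
      ultimately show ?thesis by (simp add: abs_mult mult_mono)
    qed
    have m0: "0 \<le> m" unfolding m_def by simp
    show ?thesis
    proof (cases "x0 = 0")
      case True then show ?thesis unfolding m_def using F0 by simp
    next
      case False
      have "\<exists>z. \<bar>z\<bar> \<le> r' \<and> \<bar>F x0\<bar> = \<bar>x0\<bar> * \<bar>F z * H z\<bar>"
      proof (cases "0 < x0")
        case True
        have "\<And>t. 0 \<le> t \<Longrightarrow> t \<le> x0 \<Longrightarrow> (F has_real_derivative (F t * H t)) (at t)"
          using x0in r' by (intro dF) auto
        from MVT2[OF True this] obtain z where z: "0 < z" "z < x0" "F x0 - F 0 = (x0 - 0) * (F z * H z)" by blast
        then show ?thesis using x0in F0 by (intro exI[of _ z]) (auto simp: abs_mult)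
      next
        case False
        with \<open>x0 \<noteq> 0\<close> have neg: "x0 < 0" by simp
        have "\<And>t. x0 \<le> t \<Longrightarrow> t \<le> 0 \<Longrightarrow> (F has_real_derivative (F t * H t)) (at t)"
          using x0in r' by (intro dF) auto
        from MVT2[OF neg this] obtain z where z: "x0 < z" "z < 0" "F 0 - F x0 = (0 - x0) * (F z * H z)" by blast
        then show ?thesis using x0in F0 neg by (intro exI[of _ z]) (auto simp: abs_mult)
      qed
      then obtain z where z: "\<bar>z\<bar> \<le> r'" "m = \<bar>x0\<bar> * \<bar>F z * H z\<bar>" unfolding m_def by blast
      have "\<bar>x0\<bar> * \<bar>F z * H z\<bar> \<le> r' * (m * K)"
        using x0in bnd[OF z(1)] r' K m0 by (intro mult_mono) auto
      then have "m \<le> r' * (m * K)" using z(2) by linarith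
      also have "\<dots> = m * (r' * K)" by simp
      also have "\<dots> \<le> m * (1 / 2)" using r'(3) m0 by (intro mult_left_mono) auto
      finally show ?thesis by simp
    qed
  qed
  then have "m = 0" unfolding m_def by simp
  have "\<forall>x. \<bar>x\<bar> \<le> r' \<longrightarrow> F x = 0"
  proof (intro allI impI)
    fix x assume "\<bar>x\<bar> \<le> r'"
    then have "x \<in> {-r'..r'}" by (simp add: abs_le_iff)
    then have "\<bar>F x\<bar> \<le> m" using x0 unfolding m_def by blast
    then show "F x = 0" using \<open>m = 0\<close> by simp
  qed
  then show ?thesis using r'(1) by blast
qed



theorem theorem3p8:
  fixes y :: real
  assumes "y < 1"
  shows "\<exists>r > 0. \<forall>x :: real. \<bar>x\<bar> < r \<longrightarrow>
    (\<lambda>n. (\<Sum>p\<in>ballot_perms n. y ^ pk p) * x ^ n / fact n) sums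
      sqrt ((sqrt (1 - y) * cosh (x * sqrt (1 - y)) + sinh (x * sqrt (1 - y))) /
            (sqrt (1 - y) * cosh (x * sqrt (1 - y)) - sinh (x * sqrt (1 - y))))"
proof -
  define s where "s = sqrt (1 - y)"
  have s0: "0 < s" unfolding s_def using assms by simp
  have D0: "Dn y 0 = s" unfolding Dn_def s_def by simp
  have "isCont (Dn y) 0" using Dn_deriv by (blast intro: DERIV_isCont)
  then obtain d where d: "0 < d" "\<And>x. dist x 0 < d \<Longrightarrow> dist (Dn y x) (Dn y 0) < s"
    unfolding continuous_at_eps_delta using s0 by blast
  have Dpos: "0 < Dn y x" if "\<bar>x\<bar> < d" for x
    using d(2)[of x] that D0 by (auto simp: dist_real_def abs_less_iff)
  define r where "r = min (d / 2) (1 / (2 * MM y))"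
  have r0: "0 < r" unfolding r_def using d MM_pos[of y] by simp
  have rd: "\<bar>x\<bar> < d" and rM: "\<bar>x\<bar> < 1 / MM y" if "\<bar>x\<bar> \<le> r" for x
  proof -
    show "\<bar>x\<bar> < d" using that d unfolding r_def by linarith
    have "1 / (2 * MM y) < 1 / MM y" using MM_pos[of y] by (simp add: field_simps)
    then show "\<bar>x\<bar> < 1 / MM y" using that unfolding r_def by linarith
  qed
  define F where "F x = Pf y x - Qf y x" for x
  define H where "H x = y * (Pf y x + Qf y x) + 2 * (1 - y)" for x
  have dF: "(F has_real_derivative (F x * H x)) (at x)" if "\<bar>x\<bar> \<le> r" for x
  proof -
    have dP: "(Pf y has_real_derivative (y * Pf y x ^ 2 + (1 - y) * (2 * Pf y x - 1))) (at x)"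
      by (rule P_deriv[OF rM[OF that]])
    have dQ: "(Qf y has_real_derivative (y * Qf y x ^ 2 + (1 - y) * (2 * Qf y x - 1))) (at x)"
      using Q_deriv[OF assms] Dpos[OF rd[OF that]] by simp
    have "((\<lambda>x. Pf y x - Qf y x) has_real_derivative
       ((y * Pf y x ^ 2 + (1 - y) * (2 * Pf y x - 1)) - (y * Qf y x ^ 2 + (1 - y) * (2 * Qf y x - 1)))) (at x)"
      by (rule DERIV_diff[OF dP dQ])
    moreover have "(y * Pf y x ^ 2 + (1 - y) * (2 * Pf y x - 1)) - (y * Qf y x ^ 2 + (1 - y) * (2 * Qf y x - 1))
        = F x * H x" unfolding F_def H_def by (simp add: algebra_simps power2_eq_square)
    ultimately show ?thesis unfolding F_def[abs_def] by simp
  qed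
  have cH: "continuous_on {-r..r} H"
  proof (rule continuous_at_imp_continuous_on, intro ballI)
    fix x assume "x \<in> {-r..r}"
    then have x: "\<bar>x\<bar> \<le> r" by (simp add: abs_le_iff)
    have "isCont (Pf y) x" using P_deriv[OF rM[OF x]] by (blast intro: DERIV_isCont)
    moreover have "isCont (Qf y) x"
    proof -
      have "Dn y x \<noteq> 0" using Dpos[OF rd[OF x]] by simp
      then show ?thesis using Q_deriv[OF assms] by (blast intro: DERIV_isCont)
    qed
    ultimately show "isCont H x" unfolding H_def[abs_def] by (intro continuous_intros) auto
  qed
  have F0: "F 0 = 0" unfolding F_def using Pf_0 Q_0[OF assms] by simp
  obtain r' where r': "0 < r'" "\<And>x. \<bar>x\<bar> \<le> r' \<Longrightarrow> F x = 0"
    using ode_unique[OF r0 dF cH F0] by blast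
  have "isCont (Bf y) 0" using B_deriv[of 0 y] MM_pos[of y] by (auto intro: DERIV_isCont)
  then obtain dB where dB: "0 < dB" "\<And>x. dist x 0 < dB \<Longrightarrow> dist (Bf y x) (Bf y 0) < 1"
    unfolding continuous_at_eps_delta by (meson zero_less_one)
  define rf where "rf = min (min r r') dB"
  have rf0: "0 < rf" unfolding rf_def using r0 r' dB by simp
  show ?thesis
  proof (intro exI[of _ rf] conjI allI impI rf0)
    fix x :: real assume x: "\<bar>x\<bar> < rf"
    have xr: "\<bar>x\<bar> \<le> r" and xr': "\<bar>x\<bar> \<le> r'" and xB: "\<bar>x\<bar> < dB" using x unfolding rf_def by auto
    have xM: "\<bar>x\<bar> < 1 / MM y" by (rule rM[OF xr])
    have Dx: "0 < Dn y x" by (rule Dpos[OF rd[OF xr]])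
    have sm: "(\<lambda>n. bb y n / fact n * x ^ n) sums Bf y x"
      unfolding Bf_def by (rule summable_sums[OF summable_norm_cancel[OF summ_bb[OF xM]]])
    have seq: "(\<lambda>n. (\<Sum>p\<in>ballot_perms n. y ^ pk p) * x ^ n / fact n) = (\<lambda>n. bb y n / fact n * x ^ n)"
      by (rule ext) (simp add: bb_ballot_perms)
    have Bpos: "0 < Bf y x" using dB(2)[of x] xB Bf_0 by (auto simp: dist_real_def abs_less_iff)
    have PQ: "Pf y x = Qf y x" using r'(2)[OF xr'] unfolding F_def by simp
    have "Bf y x ^ 2 = 2 * Qf y x - 1" using B_sq[OF xM] PQ by simp
    also have "\<dots> = (s * cosh (x * s) + sinh (x * s)) / (s * cosh (x * s) - sinh (x * s))"
    proof -
      have g: "s * cosh (x * s) - sinh (x * s) \<noteq> 0" using Dx unfolding Dn_def s_def by simp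
      show ?thesis unfolding Qf_def Dn_def s_def[symmetric] using g by (simp add: field_simps)
    qed
    finally have "sqrt ((s * cosh (x * s) + sinh (x * s)) / (s * cosh (x * s) - sinh (x * s))) = Bf y x"
      using Bpos by (metis abs_of_pos real_sqrt_abs)
    then show "(\<lambda>n. (\<Sum>p\<in>ballot_perms n. y ^ pk p) * x ^ n / fact n) sums
      sqrt ((sqrt (1 - y) * cosh (x * sqrt (1 - y)) + sinh (x * sqrt (1 - y))) /
            (sqrt (1 - y) * cosh (x * sqrt (1 - y)) - sinh (x * sqrt (1 - y))))"
      unfolding seq s_def[symmetric] using sm by simp
  qed
qed


end
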